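(* Fix $\zeta\in\mathbb{R}$ and $\delta\in(0,1/6)$. Define \begin{align*} E(\tau,t) =&\; \frac{i \big(\operatorname{Li}_2(e^{2 \pi t})-\operatorname{Li}_2(e^{i \pi \tau +2 \pi t})\big)}{2 \pi \tau} +\frac{\ln(1-e^{2 \pi t})}{2}\\ & +\frac{i \pi \tau}{12} \bigg(\frac{e^{2 \pi t+i \pi \tau}}{e^{2 \pi t+i \pi \tau} - 1}-\frac{e^{2 \pi \zeta }}{e^{2 \pi \zeta}+1}-\frac{e^{2 \pi t}}{e^{2 \pi \zeta }+e^{2 \pi t}}+2\bigg). \end{align*} Then there is a constant $C>0$ such that $|E(b^2,t)|\leq Cb^2$ for all sufficiently small $b>0$ and all $t$ with $\operatorname{Im} t\in(-1/2+\delta,-2\delta)$.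
   Context: Principal branches are used: $\operatorname{Im}\ln z\in(-\pi,\pi]$ and $\operatorname{Li}_2(z)=-\int_0^z\frac{\ln(1-u)}{u}du$ for $z\in\mathbb{C}\setminus[1,\infty)$. *)

theory Defs
  imports "HOL-Complex_Analysis.Complex_Analysis"
begin

text \<open>Principal dilogarithm: Li2 z = - integral from 0 to z of Ln(1-u)/u du,
  taken along the straight segment from 0 to z (the intended domain is
  the complex plane minus the ray [1,\<infinity>), where this integrand is holomorphic
  away from the removable singularity at 0, so the integral is path independent).\<close>
definition Li2 :: "complex \<Rightarrow> complex" where
  "Li2 z = - contour_integral (linepath 0 z) (\<lambda>u. Ln (1 - u) / u)"

definition Efun :: "real \<Rightarrow> complex \<Rightarrow> complex \<Rightarrow> complex" where
  "Efun \<zeta> (\<tau>::complex) (t::complex) =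
     \<i> * (Li2 (exp (2 * complex_of_real pi * t)) - Li2 (exp (\<i> * complex_of_real pi * \<tau> + 2 * complex_of_real pi * t))) / (2 * complex_of_real pi * \<tau>)
     + Ln (1 - exp (2 * complex_of_real pi * t)) / 2
     + \<i> * complex_of_real pi * \<tau> / 12 *
       (exp (2 * complex_of_real pi * t + \<i> * complex_of_real pi * \<tau>) / (exp (2 * complex_of_real pi * t + \<i> * complex_of_real pi * \<tau>) - 1)
        - exp (2 * complex_of_real pi * complex_of_real \<zeta>) / (exp (2 * complex_of_real pi * complex_of_real \<zeta>) + 1)
        - exp (2 * complex_of_real pi * t) / (exp (2 * complex_of_real pi * complex_of_real \<zeta>) + exp (2 * complex_of_real pi * t))
        + 2)"

end

theory Submission imports Defs begin

lemma Li2_deriv: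
  fixes z :: complex
  assumes z: "Im z < 0"
  shows "(Li2 has_field_derivative (- Ln (1 - z) / z)) (at z)"
proof -
  define \<epsilon> where "\<epsilon> = - Im z / (\<bar>Re z - 1\<bar> + 1)"
  have ep: "\<epsilon> > 0" unfolding \<epsilon>_def using z by (intro divide_pos_pos) auto
  define S where "S = {u::complex. Im u + \<epsilon> * Re u < \<epsilon>}"
  have zS: "z \<in> S"
  proof -
    have "\<epsilon> * (Re z - 1) \<le> \<epsilon> * \<bar>Re z - 1\<bar>" using ep by (intro mult_left_mono) auto
    also have "\<dots> < - Im z"
    proof -
      have "\<epsilon> * (\<bar>Re z - 1\<bar> + 1) = - Im z" unfolding \<epsilon>_def by (simp add: field_simps)
      thus ?thesis using ep by (simp add: algebra_simps)
    qed
    finally show ?thesis unfolding S_def by (simp add: algebra_simps)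
  qed
  have 0: "0 \<in> S" using ep by (simp add: S_def)
  have oS: "open S" unfolding S_def
    by (intro open_Collect_less continuous_intros)
  have cS: "convex S" unfolding S_def convex_def
  proof (clarify)
    fix x y :: complex and u v :: real
    assume x: "Im x + \<epsilon> * Re x < \<epsilon>" and y: "Im y + \<epsilon> * Re y < \<epsilon>" and u: "0 \<le> u" "0 \<le> v" "u + v = 1"
    have eqq: "u * \<epsilon> + v * \<epsilon> = \<epsilon>" by (metis u(3) distrib_right mult_1)
    have eq2: "Im (u *\<^sub>R x + v *\<^sub>R y) + \<epsilon> * Re (u *\<^sub>R x + v *\<^sub>R y) = u * (Im x + \<epsilon> * Re x) + v * (Im y + \<epsilon> * Re y)"
      by (simp add: algebra_simps)
    have "u * (Im x + \<epsilon> * Re x) + v * (Im y + \<epsilon> * Re y) < u * \<epsilon> + v * \<epsilon>"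
    proof (cases "u = 0")
      case True then show ?thesis using u y by simp
    next
      case False then have "u > 0" using u by simp
      then show ?thesis using x y u by (intro add_less_le_mono mult_strict_left_mono mult_left_mono) auto
    qed
    then show "Im (u *\<^sub>R x + v *\<^sub>R y) + \<epsilon> * Re (u *\<^sub>R x + v *\<^sub>R y) < \<epsilon>"
      using eqq eq2 by linarith
  qed
  have nonpos: "1 - u \<notin> \<real>\<^sub>\<le>\<^sub>0" if "u \<in> S" for u
  proof
    assume "1 - u \<in> \<real>\<^sub>\<le>\<^sub>0"
    then have "Im u = 0" "Re u \<ge> 1" by (auto simp: complex_nonpos_Reals_iff)
    with that ep show False by (simp add: S_def)
  qed
  define f where "f = (\<lambda>u::complex. Ln (1 - u) / u)"
  define g where "g = (\<lambda>u::complex. if u = 0 then -1 else f u)"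
  have dL: "((\<lambda>u. Ln (1 - u)) has_field_derivative (- inverse (1 - u))) (at u)" if "u \<in> S" for u
    using nonpos[OF that] by (auto intro!: derivative_eq_intros)
  have lim0: "(f \<longlongrightarrow> -1) (at 0)"
  proof -
    have "((\<lambda>y. (Ln (1 - (0 + y)) - Ln (1 - 0)) / y) \<longlongrightarrow> - inverse (1 - 0)) (at 0)"
      using dL[OF 0] by (simp only: DERIV_def) 
    then show ?thesis by (simp add: f_def)
  qed
  have fd: "f field_differentiable at x" if "x \<in> S" "x \<noteq> 0" for x
    unfolding f_def field_differentiable_def using DERIV_divide[OF dL[OF that(1)] DERIV_ident] that(2)
    by blast
  have gd0: "g field_differentiable at x" if x: "x \<in> S" "x \<noteq> 0" for x
  proof -
    have "g field_differentiable (at x within UNIV)"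
    proof (rule field_differentiable_transform_within[where d="norm x" and f=f])
      fix x' :: complex assume "dist x' x < norm x"
      then have "x' \<noteq> 0" by (auto simp: dist_norm)
      then show "f x' = g x'" by (simp add: g_def)
    qed (use x fd in auto)
    then show ?thesis by simp
  qed
  have gcont: "continuous_on S g"
  proof (rule continuous_at_imp_continuous_on, intro ballI)
    fix x assume x: "x \<in> S"
    show "isCont g x"
    proof (cases "x = 0")
      case True
      have "(g \<longlongrightarrow> -1) (at 0)"
        using lim0 by (rule Lim_transform_within[where d=1]) (auto simp: g_def)
      then show ?thesis using True by (simp add: isCont_def g_def)
    next
      case False
      show ?thesis using gd0[OF x False] field_differentiable_imp_continuous_at by blast
    qed
  qed
  have gd: "g field_differentiable at x" if "x \<in> interior S - {0}" for x
    using that oS gd0 by (auto simp: interior_open)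
  obtain G where G: "\<And>x. x \<in> S \<Longrightarrow> (G has_field_derivative g x) (at x within S)"
    using holomorphic_convex_primitive[OF cS _ gcont gd, of "{0}"] by auto
  have Li2eq: "Li2 w = - (G w - G 0)" if w: "w \<in> S" for w
  proof -
    have seg: "closed_segment 0 w \<subseteq> S" using cS 0 w by (simp add: convex_contains_segment)
    have "(g has_contour_integral (G w - G 0)) (linepath 0 w)"
      using contour_integral_primitive[OF G, of "linepath 0 w"] seg by auto
    moreover have "g (linepath 0 w x) * (w - 0) = f (linepath 0 w x) * (w - 0)"
      if "x \<in> {0..1} - {0::real}" for x
    proof -
      from that have "x \<noteq> 0" by auto
      then show ?thesis
        by (cases "w = 0") (simp_all add: g_def linepath_def)
    qed
    ultimately have "(f has_contour_integral (G w - G 0)) (linepath 0 w)"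
      unfolding has_contour_integral_linepath
      using has_integral_spike_finite_eq[of "{0::real}" "{0..1}" "\<lambda>x. g (linepath 0 w x) * (w - 0)" "\<lambda>x. f (linepath 0 w x) * (w - 0)"]
      by simp
    then show ?thesis unfolding Li2_def f_def by (simp add: contour_integral_unique)
  qed
  have "(G has_field_derivative g z) (at z)" using G[OF zS] at_within_open[OF zS oS] by metis
  then have "((\<lambda>w. - (G w - G 0)) has_field_derivative - g z) (at z)"
    using DERIV_minus[OF DERIV_diff[OF _ DERIV_const]] by simp
  then have "(Li2 has_field_derivative - g z) (at z)"
    by (rule has_field_derivative_transform_within_open[OF _ oS zS]) (metis Li2eq)
  moreover have "z \<noteq> 0" using z by auto
  moreover have "g z = Ln (1 - z) / z" using \<open>z \<noteq> 0\<close> by (simp add: g_def f_def)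
  ultimately show ?thesis by simp
qed
lemma sin_bound:
  fixes a \<theta> :: real
  assumes "0 < a" "a \<le> pi/2" "-pi + a \<le> \<theta>" "\<theta> \<le> -a"
  shows "sin \<theta> \<le> - sin a"
proof (cases "-\<theta> \<le> pi/2")
  case True
  have "sin a \<le> sin (-\<theta>)" using assms True by (intro sin_monotone_2pi_le) auto
  then show ?thesis by simp
next
  case False
  have "sin a \<le> sin (pi + \<theta>)" using assms False by (intro sin_monotone_2pi_le) auto
  also have "sin (pi + \<theta>) = - sin \<theta>" by (simp add: sin_add)
  finally show ?thesis by simp
qed

lemma exp_Im_bound:
  fixes c :: complex and a :: real
  assumes "0 < a" "a \<le> pi/2" "-pi + a \<le> Im c" "Im c \<le> -a"
  shows "Im (exp c) \<le> - sin a * cmod (exp c)"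
proof -
  have "Im (exp c) = exp (Re c) * sin (Im c)" by (simp add: Im_exp)
  also have "\<dots> \<le> exp (Re c) * (- sin a)"
    using sin_bound[OF assms] by (intro mult_left_mono) auto
  also have "\<dots> = - sin a * cmod (exp c)" by (simp add: norm_exp_eq_Re)
  finally show ?thesis .
qed

lemma ratio_bound:
  fixes w d :: complex and k :: real
  assumes k: "0 < k" and w: "Im w \<le> - k * cmod w" and d: "\<bar>Im d\<bar> = - Im w"
  shows "cmod (w / d) \<le> 1 / k"
proof (cases "d = 0")
  case True then show ?thesis using k by simp
next
  case False
  have "k * cmod w \<le> \<bar>Im d\<bar>" using w d by linarith
  also have "\<dots> \<le> cmod d" by (rule abs_Im_le_cmod)
  finally have "cmod w \<le> cmod d / k" using k by (simp add: field_simps)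
  then show ?thesis using False k by (simp add: norm_divide field_simps)
qed

lemma main_bound:
  fixes c :: complex and a \<tau> :: real
  assumes a: "0 < a" "a \<le> pi/2" and \<tau>: "0 < \<tau>"
    and ang: "\<And>u. 0 \<le> u \<Longrightarrow> u \<le> 1 \<Longrightarrow> -pi + a \<le> Im c + pi * \<tau> * u \<and> Im c + pi * \<tau> * u \<le> -a"
  defines "d \<equiv> \<i> * complex_of_real pi * complex_of_real \<tau>"
  shows "cmod (\<i> * (Li2 (exp c) - Li2 (exp (d + c))) / (2 * complex_of_real pi * complex_of_real \<tau>)
           + Ln (1 - exp c) / 2) \<le> pi * \<tau> / (2 * sin a)"
proof -
  define k where "k = sin a"
  have k: "0 < k" unfolding k_def using a by (intro sin_gt_zero) auto
  define W where "W = (\<lambda>s. exp (c + d * s))"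
  define L where "L = (\<lambda>s. Ln (1 - W s))"
  define S where "S = closed_segment (0::complex) 1"
  have Smem: "\<exists>u. 0 \<le> u \<and> u \<le> 1 \<and> s = complex_of_real u" if "s \<in> S" for s
    using that unfolding S_def in_segment by (auto simp: scaleR_conv_of_real)
  have nd: "cmod d = pi * \<tau>" using \<tau> by (simp add: d_def norm_mult)
  have WIm: "Im (W s) \<le> - k * cmod (W s)" if sS: "s \<in> S" for s
  proof -
    obtain u where u: "0 \<le> u" "u \<le> 1" "s = complex_of_real u" using Smem[OF sS] by blast
    have e: "Im (c + d * s) = Im c + pi * \<tau> * u" using u by (simp add: d_def)
    show ?thesis unfolding W_def k_def
      by (rule exp_Im_bound[OF a]) (use e ang[OF u(1,2)] in linarith)+
  qed
  have Wneg: "Im (W s) < 0" if "s \<in> S" for s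
  proof -
    have "cmod (W s) > 0" by (simp add: W_def)
    then have "k * cmod (W s) > 0" using k by simp
    then show ?thesis using WIm[OF that] by linarith
  qed
  have Wnz: "W s \<noteq> 0" for s by (simp add: W_def)
  have nonpos: "1 - W s \<notin> \<real>\<^sub>\<le>\<^sub>0" if "s \<in> S" for s
    using Wneg[OF that] by (auto simp: complex_nonpos_Reals_iff)
  have dW: "(W has_field_derivative W s * d) (at s)" for s
    unfolding W_def by (auto intro!: derivative_eq_intros)
  have dL: "(L has_field_derivative (- (W s * d) / (1 - W s))) (at s)" if "s \<in> S" for s
  proof -
    have "((\<lambda>s. 1 - W s) has_field_derivative - (W s * d)) (at s)"
      using DERIV_diff[OF DERIV_const dW] by simp
    from DERIV_chain2[OF has_field_derivative_Ln[OF nonpos[OF that]] this]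
    show ?thesis unfolding L_def by (simp add: divide_inverse mult.commute)
  qed
  have Lbound: "cmod (- (W s * d) / (1 - W s)) \<le> pi * \<tau> / k" if "s \<in> S" for s
  proof -
    have "cmod (W s / (1 - W s)) \<le> 1 / k"
      by (rule ratio_bound[OF k WIm[OF that]]) (use Wneg[OF that] in simp)
    then have "cmod (W s / (1 - W s)) * cmod d \<le> 1 / k * (pi * \<tau>)"
      unfolding nd by (rule mult_right_mono) (use \<tau> in auto)
    moreover have "cmod (- (W s * d) / (1 - W s)) = cmod (W s / (1 - W s)) * cmod d"
      by (simp add: norm_divide norm_mult)
    ultimately show ?thesis by simp
  qed
  have S0: "0 \<in> S" and S1: "1 \<in> S" by (auto simp: S_def)
  have cS: "convex S" by (simp add: S_def)
  have normS: "cmod s \<le> 1" if "s \<in> S" for s using Smem[OF that] by auto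
  have Ldiff: "cmod (L s - L 0) \<le> pi * \<tau> / k" if "s \<in> S" for s
  proof -
    have "cmod (L s - L 0) \<le> pi * \<tau> / k * cmod (s - 0)"
      by (rule field_differentiable_bound[OF cS _ Lbound that S0])
         (use dL has_field_derivative_at_within in blast)+
    also have "\<dots> \<le> pi * \<tau> / k * 1" using normS[OF that] k \<tau> by (intro mult_left_mono) auto
    finally show ?thesis by simp
  qed
  define \<phi> where "\<phi> = (\<lambda>s. Li2 (W s) + d * s * L 0)"
  have d\<phi>: "(\<phi> has_field_derivative d * (L 0 - L s)) (at s)" if "s \<in> S" for s
  proof -
    have "(Li2 has_field_derivative - Ln (1 - W s) / W s) (at (W s))"
      by (rule Li2_deriv[OF Wneg[OF that]])
    from DERIV_chain2[OF this dW]
    have "((\<lambda>s. Li2 (W s)) has_field_derivative - Ln (1 - W s) / W s * (W s * d)) (at s)" .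
    moreover have "- Ln (1 - W s) / W s * (W s * d) = - d * L s"
      using Wnz[of s] by (simp add: L_def field_simps)
    ultimately have "((\<lambda>s. Li2 (W s)) has_field_derivative - d * L s) (at s)" by simp
    from DERIV_add[OF this DERIV_cmult_right[OF DERIV_ident, of "d * L 0"]]
    show ?thesis unfolding \<phi>_def by (simp add: algebra_simps)
  qed
  have d\<phi>b: "cmod (d * (L 0 - L s)) \<le> (pi * \<tau>) * (pi * \<tau> / k)" if "s \<in> S" for s
  proof -
    have "cmod (L 0 - L s) \<le> pi * \<tau> / k" using Ldiff[OF that] by (simp add: norm_minus_commute)
    then have "pi * \<tau> * cmod (L 0 - L s) \<le> pi * \<tau> * (pi * \<tau> / k)"
      using \<tau> by (intro mult_left_mono) auto
    then show ?thesis using nd by (simp add: norm_mult)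
  qed
  have \<phi>diff: "cmod (\<phi> 1 - \<phi> 0) \<le> (pi * \<tau>) * (pi * \<tau> / k) * cmod (1 - 0::complex)"
    by (rule field_differentiable_bound[OF cS _ d\<phi>b S1 S0])
       (use d\<phi> has_field_derivative_at_within in blast)+
  have eq: "\<i> * (Li2 (exp c) - Li2 (exp (d + c))) / (2 * complex_of_real pi * complex_of_real \<tau>)
           + Ln (1 - exp c) / 2 = - \<i> * (\<phi> 1 - \<phi> 0) / (2 * complex_of_real pi * complex_of_real \<tau>)"
  proof -
    have p1: "\<phi> 1 = Li2 (exp (d + c)) + d * Ln (1 - exp c)"
      by (simp add: \<phi>_def W_def L_def add.commute)
    have p0: "\<phi> 0 = Li2 (exp c)" by (simp add: \<phi>_def W_def)
    have D: "complex_of_real pi * complex_of_real \<tau> \<noteq> 0" using \<tau> by simp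
    have gen: "\<i> * (A - B) / (2 * complex_of_real pi * complex_of_real \<tau>) + Lz / 2
       = - \<i> * (B + d * Lz - A) / (2 * complex_of_real pi * complex_of_real \<tau>)" for A B Lz
      using D unfolding d_def by (simp add: field_simps)
    show ?thesis unfolding p1 p0 by (rule gen)
  qed
  have "cmod (- \<i> * (\<phi> 1 - \<phi> 0) / (2 * complex_of_real pi * complex_of_real \<tau>))
       = cmod (\<phi> 1 - \<phi> 0) / (2 * pi * \<tau>)"
    using \<tau> by (simp add: norm_divide norm_mult)
  also have "\<dots> \<le> (pi * \<tau>) * (pi * \<tau> / k) / (2 * pi * \<tau>)"
    using \<phi>diff \<tau> by (intro divide_right_mono) auto
  also have "\<dots> = pi * \<tau> / (2 * k)" using \<tau> k by (simp add: field_simps)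
  finally show ?thesis unfolding eq k_def .
qed

theorem lemma4p1:
  fixes \<zeta> \<delta> :: real
  assumes "0 < \<delta>" and "\<delta> < 1/6"
  shows "\<exists>C>0. \<exists>b0>0. \<forall>b::real. 0 < b \<and> b < b0 \<longrightarrow>
           (\<forall>t::complex. -1/2 + \<delta> < Im t \<and> Im t < -2 * \<delta> \<longrightarrow>
              cmod (Efun \<zeta> (complex_of_real (b^2)) t) \<le> C * b^2)"
proof -
  define a where "a = 2 * pi * \<delta>"
  have a0: "0 < a" using assms by (simp add: a_def)
  have a1: "a \<le> pi/2" using assms pi_gt_zero unfolding a_def by (simp add: field_simps)
  define k where "k = sin a"
  have k: "0 < k" unfolding k_def using a0 a1 by (intro sin_gt_zero) auto
  define C where "C = pi / (2 * k) + pi / 12 * (2 / k + 3)"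
  have C0: "C > 0" unfolding C_def using k by (intro add_pos_pos mult_pos_pos) auto
  have main: "cmod (Efun \<zeta> (complex_of_real (b^2)) t) \<le> C * b^2"
    if b: "0 < b" "b < \<delta>" and t: "-1/2 + \<delta> < Im t" "Im t < -2 * \<delta>" for b t
  proof -
    define \<tau> where "\<tau> = b^2"
    have \<tau>0: "0 < \<tau>" using b by (simp add: \<tau>_def)
    have \<tau>1: "\<tau> < \<delta>"
    proof -
      have "b * b < \<delta> * 1" using b assms by (intro mult_strict_mono) auto
      then show ?thesis by (simp add: \<tau>_def power2_eq_square)
    qed
    define c where "c = 2 * complex_of_real pi * t"
    define d where "d = \<i> * complex_of_real pi * complex_of_real \<tau>"
    have Imc: "Im c = 2 * pi * Im t" by (simp add: c_def)
    have ang: "-pi + a \<le> Im c + pi * \<tau> * u \<and> Im c + pi * \<tau> * u \<le> -a" if u: "0 \<le> u" "u \<le> 1" for u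
    proof -
      have tu0: "0 \<le> \<tau> * u" using \<tau>0 u by simp
      have tu1: "\<tau> * u \<le> \<delta>"
      proof -
        have "\<tau> * u \<le> \<delta> * 1" using \<tau>0 \<tau>1 u by (intro mult_mono) auto
        then show ?thesis by simp
      qed
      have i1: "-1 + 2 * \<delta> \<le> 2 * Im t + \<tau> * u" using t tu0 by linarith
      have i2: "2 * Im t + \<tau> * u \<le> - 2 * \<delta>" using t tu1 assms by linarith
      have j1: "pi * (-1 + 2 * \<delta>) \<le> pi * (2 * Im t + \<tau> * u)"
        using i1 by (intro mult_left_mono) auto
      have j2: "pi * (2 * Im t + \<tau> * u) \<le> pi * (- 2 * \<delta>)"
        using i2 by (intro mult_left_mono) auto
      show ?thesis unfolding Imc a_def using j1 j2 by (simp add: algebra_simps)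
    qed
    have T12: "cmod (\<i> * (Li2 (exp c) - Li2 (exp (d + c))) / (2 * complex_of_real pi * complex_of_real \<tau>)
           + Ln (1 - exp c) / 2) \<le> pi * \<tau> / (2 * k)"
      unfolding k_def d_def by (rule main_bound[OF a0 a1 \<tau>0 ang])
    have W1: "Im (exp (c + d)) \<le> - k * cmod (exp (c + d))"
    proof -
      have "Im (c + d) = Im c + pi * \<tau> * 1" by (simp add: d_def)
      then show ?thesis unfolding k_def by (intro exp_Im_bound[OF a0 a1]) (use ang[of 1] in auto)
    qed
    have W0: "Im (exp c) \<le> - k * cmod (exp c)"
      unfolding k_def by (intro exp_Im_bound[OF a0 a1]) (use ang[of 0] in auto)
    have "0 \<le> k * cmod (exp (c + d))" using k by simp
    then have W1n: "Im (exp (c + d)) \<le> 0" using W1 by linarith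
    have "0 \<le> k * cmod (exp c)" using k by simp
    then have W0n: "Im (exp c) \<le> 0" using W0 by linarith
    define r where "r = exp (2 * pi * \<zeta>)"
    have r0: "r > 0" by (simp add: r_def)
    have er: "exp (2 * complex_of_real pi * complex_of_real \<zeta>) = complex_of_real r"
      unfolding r_def by (simp flip: exp_of_real)
    have X: "cmod (exp (c + d) / (exp (c + d) - 1)) \<le> 1 / k"
      by (rule ratio_bound[OF k W1]) (use W1n in simp)
    have Y: "cmod (complex_of_real r / (complex_of_real r + 1)) \<le> 1"
    proof -
      have "complex_of_real r / (complex_of_real r + 1) = complex_of_real (r / (r + 1))" by simp
      moreover have "\<bar>r / (r + 1)\<bar> \<le> 1" using r0 by simp
      ultimately show ?thesis by (simp only: norm_of_real)
    qed
    have Z: "cmod (exp c / (complex_of_real r + exp c)) \<le> 1 / k"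
      by (rule ratio_bound[OF k W0]) (use W0n in simp)
    define B where "B = exp (c + d) / (exp (c + d) - 1) - complex_of_real r / (complex_of_real r + 1)
       - exp c / (complex_of_real r + exp c) + 2"
    have Bb: "cmod B \<le> 1 / k + 1 + 1 / k + 2"
    proof -
      have "cmod B \<le> cmod (exp (c + d) / (exp (c + d) - 1)) + cmod (complex_of_real r / (complex_of_real r + 1))
          + cmod (exp c / (complex_of_real r + exp c)) + cmod (2::complex)"
        unfolding B_def
        apply (rule order_trans[OF norm_triangle_ineq])
        apply (rule add_mono[OF _ order_refl])
        apply (rule order_trans[OF norm_triangle_ineq4])
        apply (rule add_mono[OF _ order_refl])
        apply (rule norm_triangle_ineq4)
        done
      then show ?thesis using X Y Z by simp
    qed
    have T3: "cmod (d / 12 * B) \<le> pi * \<tau> / 12 * (2 / k + 3)"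
    proof -
      have "cmod (d / 12 * B) = pi * \<tau> / 12 * cmod B" using \<tau>0 by (simp add: d_def norm_mult norm_divide)
      also have "\<dots> \<le> pi * \<tau> / 12 * (2 / k + 3)" using Bb \<tau>0 by (intro mult_left_mono) auto
      finally show ?thesis .
    qed
    have Eeq: "Efun \<zeta> (complex_of_real (b^2)) t =
       (\<i> * (Li2 (exp c) - Li2 (exp (d + c))) / (2 * complex_of_real pi * complex_of_real \<tau>)
           + Ln (1 - exp c) / 2) + d / 12 * B"
      unfolding Efun_def B_def c_def d_def \<tau>_def er ..
    have "cmod (Efun \<zeta> (complex_of_real (b^2)) t) \<le> pi * \<tau> / (2 * k) + pi * \<tau> / 12 * (2 / k + 3)"
      unfolding Eeq by (rule order_trans[OF norm_triangle_ineq add_mono[OF T12 T3]])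
    also have "\<dots> = C * b^2" unfolding C_def \<tau>_def using k by (simp add: field_simps)
    finally show ?thesis .
  qed
  show ?thesis
    using C0 assms(1) main by blast
qed

end
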